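(* Let $*\in\{\pm,\curlyvee,\Join,1\}$. For every $\phi\in\mathcal{L}$ and every state $\mathfrak{s}$ of the canonical model $\mathfrak{M}^{C}_*$: (1) $\mathfrak{M}^{C}_*,\mathfrak{s}\Vdash^+\phi$ iff $\phi\in\mathbf{h}(\mathfrak{s})$; (2) $\mathfrak{M}^{C}_*,\mathfrak{s}\Vdash^-\phi$ iff ${\sim}\phi\in\mathbf{h}(\mathfrak{s})$.
   Context: Fix a countable set $\mathsf{Prop}$ of propositional variables. The language $\mathcal{L}$ is given by the grammar $\phi::=p\mid{\sim}\phi\mid(\phi\wedge\phi)\mid(\phi\vee\phi)\mid(\phi\to\phi)\mid\Box\phi\mid\Diamond\phi$ with $p\in\mathsf{Prop}$. $\phi\leftrightarrow\chi$ abbreviates $(\phi\to\chi)\wedge(\chi\to\phi)$. Semantics. A structure $\langle W,\le,R^+_\Box,R^-_\Box,R^+_\Diamond,R^-_\Diamond,v^+,v^-\rangle$ with $W\ne\varnothing$, $\le$ a preorder, four arbitrary binary relations, and $v^+,v^-:\mathsf{Prop}\to2^W$ upward closed under $\le$ is a $\mathsf{CN4K}$ model; $R(w)=\{w'\mid wRw'\}$. Support: $w\Vdash^\pm p$ iff $w\in v^\pm(p)$; $w\Vdash^+{\sim}\phi$ iff $w\Vdash^-\phi$; $w\Vdash^-{\sim}\phi$ iff $w\Vdash^+\phi$; $w\Vdash^+\phi\wedge\chi$ iff both; $w\Vdash^-\phi\wedge\chi$ iff $w\Vdash^-\phi$ or $w\Vdash^-\chi$; $w\Vdash^+\phi\vee\chi$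 iff $w\Vdash^+\phi$ or $w\Vdash^+\chi$; $w\Vdash^-\phi\vee\chi$ iff both negatively supported; $w\Vdash^+\phi\to\chi$ iff for all $w'\ge w$, $w'\Vdash^+\phi$ implies $w'\Vdash^+\chi$; $w\Vdash^-\phi\to\chi$ iff $w\Vdash^+\phi$ and $w\Vdash^-\chi$; $w\Vdash^+\Box\phi$ iff $\forall w'\ge w\ \forall w''\in R^+_\Box(w')$: $w''\Vdash^+\phi$; $w\Vdash^-\Box\phi$ iff $\forall w'\ge w\ \exists w''\in R^-_\Box(w')$: $w''\Vdash^-\phi$; $w\Vdash^+\Diamond\phi$ iff $\forall w'\ge w\ \exists w''\in R^+_\Diamond(w')$: $w''\Vdash^+\phi$; $w\Vdash^-\Diamond\phi$ iff $\forall w'\ge w\ \forall w''\in R^-_\Diamond(w')$: $w''\Vdash^-\phi$. Calculi. $\mathcal{H}\mathsf{N4}$ has as axioms all $\mathcal{L}$-instances of: $\phi\to(\chi\to\phi)$; $(\phi\to(\chi\to\psi))\to((\phi\to\chi)\to(\phi\to\psi))$; $\phi\wedge\chi\to\phi$; $\phi\wedge\chi\to\chi$; $\phi\to(\chi\to\phi\wedge\chi)$; $\phi\to\phi\vee\chi$; $\chi\to\phi\vee\chi$; $(\phi\to\psi)\to((\chi\to\psi)\to(\phi\vee\chi\to\psi))$; ${\sim}{\sim}\phi\leftrightarrow\phi$; ${\sim}(\phi\wedge\chi)\leftrightarrow({\sim}\phi\vee{\sim}\chi)$; ${\sim}(\phi\vee\chi)\leftrightarrow({\sim}\phi\wedge{\sim}\chi)$;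 ${\sim}(\phi\to\chi)\leftrightarrow(\phi\wedge{\sim}\chi)$; and modus ponens. $\mathcal{H}\mathsf{CN4K}$ adds the axiom schemes $\Box(\phi\to\phi)$; ${\sim}\Diamond{\sim}(\phi\to\phi)$; $(\Box\phi\wedge\Box\chi)\to\Box(\phi\wedge\chi)$; $({\sim}\Diamond\phi\wedge{\sim}\Diamond\chi)\to{\sim}\Diamond(\phi\vee\chi)$, and the rules: from $\vdash\phi\to\chi$ infer $\vdash\Box\phi\to\Box\chi$; from $\vdash\phi\to\chi$ infer $\vdash\Diamond\phi\to\Diamond\chi$; from $\vdash{\sim}\phi\to{\sim}\chi$ infer $\vdash{\sim}\Box\phi\to{\sim}\Box\chi$; from $\vdash{\sim}\phi\to{\sim}\chi$ infer $\vdash{\sim}\Diamond\phi\to{\sim}\Diamond\chi$. Additional schemes: $\pm_\Box$: $\Box(\phi\to\chi)\to(\Diamond\phi\to\Diamond\chi)$; $\pm_\Diamond$: ${\sim}\Diamond{\sim}({\sim}\phi\to{\sim}\chi)\to({\sim}\Box\phi\to{\sim}\Box\chi)$; $\curlyvee_\Box$: $\Box(\phi\to\chi)\to({\sim}\Box{\sim}\phi\to{\sim}\Box{\sim}\chi)$; $\curlyvee_\Diamond$: ${\sim}\Diamond{\sim}(\phi\to\chi)\to(\Diamond\phi\to\Diamond\chi)$; $\Join_\Box$: $\Box\phi\leftrightarrow{\sim}\Diamond{\sim}\phi$; $\Join_\Diamond$: $\Diamond\phi\leftrightarrow{\sim}\Box{\sim}\phi$. $\mathcal{H}\mathsf{CN4K}^\pm$,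 $\mathcal{H}\mathsf{CN4K}^\curlyvee$, $\mathcal{H}\mathsf{CN4K}^{\Join}$ are $\mathcal{H}\mathsf{CN4K}$ plus $\{\pm_\Box,\pm_\Diamond\}$, $\{\curlyvee_\Box,\curlyvee_\Diamond\}$, $\{\Join_\Box,\Join_\Diamond\}$ respectively; $\mathcal{H}\mathsf{CN4K}^1$ is $\mathcal{H}\mathsf{CN4K}$ plus all six. $\Gamma\vdash_{\mathcal{H}\mathsf{L}}\phi$ means there is a finite sequence ending in $\phi$ of axiom instances, members of $\Gamma$, and rule consequences of earlier members, the modal rules being applied only to theorems. Canonical models. For fixed $*$, a set $\Xi\subseteq\mathcal{L}$ is saturated if it is deductively closed under $\vdash_{\mathcal{H}\mathsf{CN4K}^*}$ and prime ($\xi\vee\xi'\in\Xi$ implies $\xi\in\Xi$ or $\xi'\in\Xi$). A segment is a tuple $\mathfrak{s}=\langle\Xi,\Phi^+_\Box,\Phi^-_\Box,\Phi^+_\Diamond,\Phi^-_\Diamond\rangle$ where $\Xi$ is saturated (the head, $\mathbf{h}(\mathfrak{s})=\Xi$) and each $\Phi^\bullet_\heartsuit$ is a set (possibly empty) of saturated sets such that: if $\Box\phi\in\Xi$ then $\phi\in\Delta$ for every $\Delta\in\Phi^+_\Box$; if ${\sim}\Box\phi\in\Xi$ then ${\sim}\phi\in\Delta$ for some $\Delta\in\Phi^-_\Box$; if $\Diamond\phi\in\Xi$ then $\phi\in\Delta$ for some $\Delta\in\Phi^+_\Diamond$; if ${\sim}\Diamond\phi\in\Xi$ then ${\sim}\phi\in\Delta$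 for every $\Delta\in\Phi^-_\Diamond$. A segment is a $\pm$-segment if $\Phi^+_\Box=\Phi^+_\Diamond$ and $\Phi^-_\Box=\Phi^-_\Diamond$; a $\curlyvee$-segment if $\Phi^+_\Box=\Phi^-_\Box$ and $\Phi^+_\Diamond=\Phi^-_\Diamond$; a $\Join$-segment if $\Phi^+_\Box=\Phi^-_\Diamond$ and $\Phi^+_\Diamond=\Phi^-_\Box$; a $1$-segment if all four families coincide. $\mathfrak{M}^{C}_*$ has as states all $*$-segments, $\mathfrak{s}\le^{C}\mathfrak{s}'$ iff $\mathbf{h}(\mathfrak{s})\subseteq\mathbf{h}(\mathfrak{s}')$, $\mathfrak{s}\,{R^\bullet_\heartsuit}^{C}\,\mathfrak{s}'$ iff $\mathbf{h}(\mathfrak{s}')\in\Phi^\bullet_\heartsuit$ (the corresponding component of $\mathfrak{s}$), $\mathfrak{s}\in{v^+}^{C}(p)$ iff $p\in\mathbf{h}(\mathfrak{s})$, $\mathfrak{s}\in{v^-}^{C}(p)$ iff ${\sim}p\in\mathbf{h}(\mathfrak{s})$. *)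

theory Defs
  imports Main "HOL-Library.Countable"
begin

datatype 'p fm =
    Var 'p
  | Neg "'p fm"             (* strong negation ~ *)
  | Conj "'p fm" "'p fm"
  | Disj "'p fm" "'p fm"
  | Imp "'p fm" "'p fm"
  | Box "'p fm"
  | Dia "'p fm"

definition Iff :: "'p fm \<Rightarrow> 'p fm \<Rightarrow> 'p fm" where
  "Iff a b = Conj (Imp a b) (Imp b a)"

datatype variant = VPm | VVee | VJoin | VOne

inductive_set n4_ax :: "'p fm set" where
  "Imp a (Imp b a) \<in> n4_ax"
| "Imp (Imp a (Imp b c)) (Imp (Imp a b) (Imp a c)) \<in> n4_ax"
| "Imp (Conj a b) a \<in> n4_ax"
| "Imp (Conj a b) b \<in> n4_ax"
| "Imp a (Imp b (Conj a b)) \<in> n4_ax"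
| "Imp a (Disj a b) \<in> n4_ax"
| "Imp b (Disj a b) \<in> n4_ax"
| "Imp (Imp a c) (Imp (Imp b c) (Imp (Disj a b) c)) \<in> n4_ax"
| "Iff (Neg (Neg a)) a \<in> n4_ax"
| "Iff (Neg (Conj a b)) (Disj (Neg a) (Neg b)) \<in> n4_ax"
| "Iff (Neg (Disj a b)) (Conj (Neg a) (Neg b)) \<in> n4_ax"
| "Iff (Neg (Imp a b)) (Conj a (Neg b)) \<in> n4_ax"

inductive_set cn4k_ax :: "'p fm set" where
  "Box (Imp a a) \<in> cn4k_ax"
| "Neg (Dia (Neg (Imp a a))) \<in> cn4k_ax"
| "Imp (Conj (Box a) (Box b)) (Box (Conj a b)) \<in> cn4k_ax"
| "Imp (Conj (Neg (Dia a)) (Neg (Dia b))) (Neg (Dia (Disj a b))) \<in> cn4k_ax"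

inductive_set pm_ax :: "'p fm set" where
  pm_box: "Imp (Box (Imp a b)) (Imp (Dia a) (Dia b)) \<in> pm_ax"
| pm_dia: "Imp (Neg (Dia (Neg (Imp (Neg a) (Neg b))))) (Imp (Neg (Box a)) (Neg (Box b))) \<in> pm_ax"

inductive_set vee_ax :: "'p fm set" where
  vee_box: "Imp (Box (Imp a b)) (Imp (Neg (Box (Neg a))) (Neg (Box (Neg b)))) \<in> vee_ax"
| vee_dia: "Imp (Neg (Dia (Neg (Imp a b)))) (Imp (Dia a) (Dia b)) \<in> vee_ax"

inductive_set join_ax :: "'p fm set" where
  join_box: "Iff (Box a) (Neg (Dia (Neg a))) \<in> join_ax"
| join_dia: "Iff (Dia a) (Neg (Box (Neg a))) \<in> join_ax"

fun extra_ax :: "variant \<Rightarrow> 'p fm set" where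
  "extra_ax VPm = pm_ax"
| "extra_ax VVee = vee_ax"
| "extra_ax VJoin = join_ax"
| "extra_ax VOne = pm_ax \<union> vee_ax \<union> join_ax"

definition axioms :: "variant \<Rightarrow> 'p fm set" where
  "axioms L = n4_ax \<union> cn4k_ax \<union> extra_ax L"

inductive thmL :: "variant \<Rightarrow> 'p fm \<Rightarrow> bool" for L where
  ax: "a \<in> axioms L \<Longrightarrow> thmL L a"
| mp: "thmL L (Imp a b) \<Longrightarrow> thmL L a \<Longrightarrow> thmL L b"
| rbox: "thmL L (Imp a b) \<Longrightarrow> thmL L (Imp (Box a) (Box b))"
| rdia: "thmL L (Imp a b) \<Longrightarrow> thmL L (Imp (Dia a) (Dia b))"
| rnbox: "thmL L (Imp (Neg a) (Neg b)) \<Longrightarrow> thmL L (Imp (Neg (Box a)) (Neg (Box b)))"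
| rndia: "thmL L (Imp (Neg a) (Neg b)) \<Longrightarrow> thmL L (Imp (Neg (Dia a)) (Neg (Dia b)))"

text \<open>Derivability from premises: modal rules only applied to theorems.\<close>
inductive derives :: "variant \<Rightarrow> 'p fm set \<Rightarrow> 'p fm \<Rightarrow> bool" for L G where
  theorem_rule: "thmL L a \<Longrightarrow> derives L G a"
| hyp: "a \<in> G \<Longrightarrow> derives L G a"
| mp: "derives L G (Imp a b) \<Longrightarrow> derives L G a \<Longrightarrow> derives L G b"

definition saturated :: "variant \<Rightarrow> 'p fm set \<Rightarrow> bool" where
  "saturated L X \<longleftrightarrow> (\<forall>a. derives L X a \<longrightarrow> a \<in> X)
      \<and> (\<forall>a b. Disj a b \<in> X \<longrightarrow> a \<in> X \<or> b \<in> X)"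

record 'p seg =
  head :: "'p fm set"
  PhiBp :: "'p fm set set"
  PhiBm :: "'p fm set set"
  PhiDp :: "'p fm set set"
  PhiDm :: "'p fm set set"

definition segment :: "variant \<Rightarrow> 'p seg \<Rightarrow> bool" where
  "segment L s \<longleftrightarrow> saturated L (head s)
     \<and> (\<forall>D \<in> PhiBp s. saturated L D) \<and> (\<forall>D \<in> PhiBm s. saturated L D)
     \<and> (\<forall>D \<in> PhiDp s. saturated L D) \<and> (\<forall>D \<in> PhiDm s. saturated L D)
     \<and> (\<forall>a. Box a \<in> head s \<longrightarrow> (\<forall>D \<in> PhiBp s. a \<in> D))
     \<and> (\<forall>a. Neg (Box a) \<in> head s \<longrightarrow> (\<exists>D \<in> PhiBm s. Neg a \<in> D))
     \<and> (\<forall>a. Dia a \<in> head s \<longrightarrow> (\<exists>D \<in> PhiDp s. a \<in> D))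
     \<and> (\<forall>a. Neg (Dia a) \<in> head s \<longrightarrow> (\<forall>D \<in> PhiDm s. Neg a \<in> D))"

fun shape :: "variant \<Rightarrow> 'p seg \<Rightarrow> bool" where
  "shape VPm s \<longleftrightarrow> PhiBp s = PhiDp s \<and> PhiBm s = PhiDm s"
| "shape VVee s \<longleftrightarrow> PhiBp s = PhiBm s \<and> PhiDp s = PhiDm s"
| "shape VJoin s \<longleftrightarrow> PhiBp s = PhiDm s \<and> PhiDp s = PhiBm s"
| "shape VOne s \<longleftrightarrow> PhiBp s = PhiBm s \<and> PhiBp s = PhiDp s \<and> PhiBp s = PhiDm s"

definition star_segment :: "variant \<Rightarrow> 'p seg \<Rightarrow> bool" where
  "star_segment L s \<longleftrightarrow> segment L s \<and> shape L s"

record ('w, 'p) cmodel =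
  W :: "'w set"
  le :: "'w \<Rightarrow> 'w \<Rightarrow> bool"
  RBp :: "'w \<Rightarrow> 'w \<Rightarrow> bool"
  RBm :: "'w \<Rightarrow> 'w \<Rightarrow> bool"
  RDp :: "'w \<Rightarrow> 'w \<Rightarrow> bool"
  RDm :: "'w \<Rightarrow> 'w \<Rightarrow> bool"
  vp :: "'p \<Rightarrow> 'w set"
  vm :: "'p \<Rightarrow> 'w set"

text \<open>forces M True w a: w supports a positively; forces M False w a: negatively.\<close>
fun forces :: "('w, 'p) cmodel \<Rightarrow> bool \<Rightarrow> 'w \<Rightarrow> 'p fm \<Rightarrow> bool" where
  "forces M True w (Var p) = (w \<in> vp M p)"
| "forces M False w (Var p) = (w \<in> vm M p)"
| "forces M b w (Neg a) = forces M (\<not> b) w a"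
| "forces M True w (Conj a c) = (forces M True w a \<and> forces M True w c)"
| "forces M False w (Conj a c) = (forces M False w a \<or> forces M False w c)"
| "forces M True w (Disj a c) = (forces M True w a \<or> forces M True w c)"
| "forces M False w (Disj a c) = (forces M False w a \<and> forces M False w c)"
| "forces M True w (Imp a c) =
     (\<forall>w' \<in> W M. le M w w' \<longrightarrow> forces M True w' a \<longrightarrow> forces M True w' c)"
| "forces M False w (Imp a c) = (forces M True w a \<and> forces M False w c)"
| "forces M True w (Box a) =
     (\<forall>w' \<in> W M. le M w w' \<longrightarrow> (\<forall>w'' \<in> W M. RBp M w' w'' \<longrightarrow> forces M True w'' a))"
| "forces M False w (Box a) =
     (\<forall>w' \<in> W M. le M w w' \<longrightarrow> (\<exists>w'' \<in> W M. RBm M w' w'' \<and> forces M False w'' a))"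
| "forces M True w (Dia a) =
     (\<forall>w' \<in> W M. le M w w' \<longrightarrow> (\<exists>w'' \<in> W M. RDp M w' w'' \<and> forces M True w'' a))"
| "forces M False w (Dia a) =
     (\<forall>w' \<in> W M. le M w w' \<longrightarrow> (\<forall>w'' \<in> W M. RDm M w' w'' \<longrightarrow> forces M False w'' a))"

definition canon :: "variant \<Rightarrow> ('p seg, 'p) cmodel" where
  "canon L = \<lparr> W = {s. star_segment L s},
     le = (\<lambda>s s'. head s \<subseteq> head s'),
     RBp = (\<lambda>s s'. head s' \<in> PhiBp s),
     RBm = (\<lambda>s s'. head s' \<in> PhiBm s),
     RDp = (\<lambda>s s'. head s' \<in> PhiDp s),
     RDm = (\<lambda>s s'. head s' \<in> PhiDm s),
     vp = (\<lambda>p. {s. star_segment L s \<and> Var p \<in> head s}),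
     vm = (\<lambda>p. {s. star_segment L s \<and> Neg (Var p) \<in> head s}) \<rparr>"

end

theory Submission
  imports Defs
begin


lemma ax_n4: "a \<in> n4_ax \<Longrightarrow> thmL L a"
  by (rule thmL.ax) (simp add: axioms_def)

lemma ax_cn4k: "a \<in> cn4k_ax \<Longrightarrow> thmL L a"
  by (rule thmL.ax) (simp add: axioms_def)

lemma dax: "a \<in> n4_ax \<Longrightarrow> derives L G a"
  by (rule derives.theorem_rule) (rule ax_n4)

lemma dK: "derives L G (Imp a (Imp b a))"
  by (rule dax) (rule n4_ax.intros)

lemma dS: "derives L G (Imp (Imp a (Imp b c)) (Imp (Imp a b) (Imp a c)))"
  by (rule dax) (rule n4_ax.intros)

lemma drefl: "derives L G (Imp a a)"
proof -
  have "derives L G (Imp (Imp a (Imp (Imp a a) a)) (Imp (Imp a (Imp a a)) (Imp a a)))" by (rule dS)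
  then have "derives L G (Imp (Imp a (Imp a a)) (Imp a a))" using dK derives.mp by blast
  then show ?thesis using dK derives.mp by blast
qed

lemma deduction: "derives L (insert a G) b \<Longrightarrow> derives L G (Imp a b)"
proof (induction rule: derives.induct)
  case (theorem_rule b)
  then show ?case using dK derives.mp derives.theorem_rule by blast
next
  case (hyp b)
  then show ?case using dK derives.mp derives.hyp drefl by blast
next
  case (mp b c)
  then show ?case using dS derives.mp by blast
qed

lemma dmono: "derives L G a \<Longrightarrow> G \<subseteq> G' \<Longrightarrow> derives L G' a"
  by (induction rule: derives.induct) (auto intro: derives.intros)

lemma cut: "derives L (insert a G) b \<Longrightarrow> derives L G a \<Longrightarrow> derives L G b"
  using deduction derives.mp by blast

lemma thm_of: "derives L {} a \<Longrightarrow> thmL L a"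
  by (induction rule: derives.induct) (auto intro: thmL.mp)

lemma compact: "derives L G a \<Longrightarrow> \<exists>F. finite F \<and> F \<subseteq> G \<and> derives L F a"
proof (induction rule: derives.induct)
  case (theorem_rule a)
  then show ?case by (intro exI[of _ "{}"]) (auto intro: derives.intros)
next
  case (hyp a)
  then show ?case by (intro exI[of _ "{a}"]) (auto intro: derives.intros)
next
  case (mp a b)
  then obtain F1 F2 where "finite F1" "F1 \<subseteq> G" "derives L F1 (Imp a b)"
      "finite F2" "F2 \<subseteq> G" "derives L F2 a" by blast
  moreover have "derives L (F1 \<union> F2) (Imp a b)" by (rule dmono[OF \<open>derives L F1 (Imp a b)\<close>]) auto
  moreover have "derives L (F1 \<union> F2) a" by (rule dmono[OF \<open>derives L F2 a\<close>]) auto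
  ultimately show ?case
    by (intro exI[of _ "F1 \<union> F2"]) (auto intro: derives.mp)
qed

lemma conjI_d: "derives L G a \<Longrightarrow> derives L G b \<Longrightarrow> derives L G (Conj a b)"
  using dax[OF n4_ax.intros(5)] derives.mp by blast
lemma conjE1_d: "derives L G (Conj a b) \<Longrightarrow> derives L G a"
  using dax[OF n4_ax.intros(3)] derives.mp by blast
lemma conjE2_d: "derives L G (Conj a b) \<Longrightarrow> derives L G b"
  using dax[OF n4_ax.intros(4)] derives.mp by blast
lemma disjI1_d: "derives L G a \<Longrightarrow> derives L G (Disj a b)"
  using dax[OF n4_ax.intros(6)] derives.mp by blast
lemma disjI2_d: "derives L G b \<Longrightarrow> derives L G (Disj a b)"
  using dax[OF n4_ax.intros(7)] derives.mp by blast
lemma disjE_d: "derives L G (Disj a b) \<Longrightarrow> derives L G (Imp a c) \<Longrightarrow> derives L G (Imp b c) \<Longrightarrow> derives L G c"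
  using dax[OF n4_ax.intros(8)] derives.mp by blast
lemma iffD1_d: "derives L G (Iff a b) \<Longrightarrow> derives L G a \<Longrightarrow> derives L G b"
  unfolding Iff_def using conjE1_d derives.mp by blast
lemma iffD2_d: "derives L G (Iff a b) \<Longrightarrow> derives L G b \<Longrightarrow> derives L G a"
  unfolding Iff_def using conjE2_d derives.mp by blast

lemma negneg_d: "derives L G (Neg (Neg a)) \<longleftrightarrow> derives L G a"
  using iffD1_d iffD2_d dax[OF n4_ax.intros(9)] by blast
lemma negconj_d: "derives L G (Neg (Conj a b)) \<longleftrightarrow> derives L G (Disj (Neg a) (Neg b))"
  using iffD1_d iffD2_d dax[OF n4_ax.intros(10)] by blast
lemma negdisj_d: "derives L G (Neg (Disj a b)) \<longleftrightarrow> derives L G (Conj (Neg a) (Neg b))"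
  using iffD1_d iffD2_d dax[OF n4_ax.intros(11)] by blast
lemma negimp_d: "derives L G (Neg (Imp a b)) \<longleftrightarrow> derives L G (Conj a (Neg b))"
  using iffD1_d iffD2_d dax[OF n4_ax.intros(12)] by blast

lemma thm_by: "derives L {a} b \<Longrightarrow> thmL L (Imp a b)"
  using deduction thm_of by blast

lemma lindenbaum:
  assumes "\<not> derives L G \<phi>"
  shows "\<exists>X. G \<subseteq> X \<and> saturated L X \<and> \<phi> \<notin> X"
proof -
  let ?A = "{Y. G \<subseteq> Y \<and> \<not> derives L Y \<phi>}"
  have "\<exists>M\<in>?A. \<forall>Y\<in>?A. M \<subseteq> Y \<longrightarrow> Y = M"
  proof (rule subset_Zorn)
    fix C assume ch: "subset.chain ?A C"
    show "\<exists>U\<in>?A. \<forall>Y\<in>C. Y \<subseteq> U"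
    proof (cases "C = {}")
      case True show ?thesis using True assms by (intro bexI[of _ G]) auto
    next
      case False
      have "\<not> derives L (\<Union>C) \<phi>"
      proof
        assume "derives L (\<Union>C) \<phi>"
        from compact[OF this] obtain F where F: "finite F" "F \<subseteq> \<Union>C" "derives L F \<phi>" by blast
        obtain Y where Y: "Y \<in> C" "F \<subseteq> Y" by (rule finite_subset_Union_chain[OF F(1,2) False ch])
        have "derives L Y \<phi>" by (rule dmono[OF F(3) Y(2)])
        moreover have "Y \<in> ?A" using ch Y(1) unfolding subset.chain_def by blast
        ultimately show False by simp
      qed
      moreover have "G \<subseteq> \<Union>C" using False ch unfolding subset.chain_def by blast
      ultimately have UA: "\<Union>C \<in> ?A" unfolding mem_Collect_eq by (intro conjI)
      have "\<forall>Y\<in>C. Y \<subseteq> \<Union>C" by (intro ballI Union_upper)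
      with UA show ?thesis by (rule bexI[rotated])
    qed
  qed
  then obtain M where MA: "M \<in> ?A" and MB: "\<forall>Y\<in>?A. M \<subseteq> Y \<longrightarrow> Y = M" by (elim bexE)
  have M1: "G \<subseteq> M" "\<not> derives L M \<phi>" using MA by simp_all
  have M2: "Y = M" if "G \<subseteq> Y" "\<not> derives L Y \<phi>" "M \<subseteq> Y" for Y
    using MB that by simp
  have ext: "derives L (insert a M) \<phi>" if "a \<notin> M" for a
  proof (rule ccontr)
    assume "\<not> derives L (insert a M) \<phi>"
    then have "insert a M = M" using M1(1) by (intro M2) auto
    with that show False by blast
  qed
  have cl: "a \<in> M" if "derives L M a" for a
  proof (rule ccontr)
    assume "a \<notin> M"
    then have "derives L (insert a M) \<phi>" by (rule ext)
    then have "derives L M \<phi>" using that by (rule cut)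
    then show False using M1(2) by blast
  qed
  have pr: "a \<in> M \<or> b \<in> M" if "Disj a b \<in> M" for a b
  proof (rule ccontr)
    assume "\<not> (a \<in> M \<or> b \<in> M)"
    then have "derives L M (Imp a \<phi>)" "derives L M (Imp b \<phi>)"
      by (auto intro!: deduction ext)
    moreover have "derives L M (Disj a b)" using that by (rule derives.hyp)
    ultimately have "derives L M \<phi>" using disjE_d by blast
    with M1(2) show False by blast
  qed
  have "\<phi> \<notin> M" using M1(2) derives.hyp by metis
  moreover have "saturated L M" unfolding saturated_def using cl pr by blast
  ultimately show ?thesis using M1(1) by blast
qed



lemma sat_cl: "saturated L X \<Longrightarrow> derives L X a \<Longrightarrow> a \<in> X"
  unfolding saturated_def by blast

lemma sat_pr: "saturated L X \<Longrightarrow> Disj a b \<in> X \<Longrightarrow> a \<in> X \<or> b \<in> X"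
  unfolding saturated_def by blast

lemma sat_iff_d:
  assumes "saturated L X" "\<And>G. derives L G a \<longleftrightarrow> derives L G b"
  shows "a \<in> X \<longleftrightarrow> b \<in> X"
  using assms sat_cl derives.hyp by metis

lemma sat_conj: "saturated L X \<Longrightarrow> Conj a b \<in> X \<longleftrightarrow> a \<in> X \<and> b \<in> X"
  by (meson conjE1_d conjE2_d conjI_d derives.hyp sat_cl)

lemma sat_disj: "saturated L X \<Longrightarrow> Disj a b \<in> X \<longleftrightarrow> a \<in> X \<or> b \<in> X"
  by (meson disjI1_d disjI2_d derives.hyp sat_cl sat_pr)

lemma sat_negneg: assumes "saturated L X" shows "Neg (Neg a) \<in> X \<longleftrightarrow> a \<in> X"
  by (rule sat_iff_d[OF assms]) (rule negneg_d)

lemma sat_negconj: "saturated L X \<Longrightarrow> Neg (Conj a b) \<in> X \<longleftrightarrow> Neg a \<in> X \<or> Neg b \<in> X"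
proof -
  assume X: "saturated L X"
  have "Neg (Conj a b) \<in> X \<longleftrightarrow> Disj (Neg a) (Neg b) \<in> X"
    using X by (rule sat_iff_d) (rule negconj_d)
  then show ?thesis using sat_disj[OF X] by simp
qed

lemma sat_negdisj: "saturated L X \<Longrightarrow> Neg (Disj a b) \<in> X \<longleftrightarrow> Neg a \<in> X \<and> Neg b \<in> X"
proof -
  assume X: "saturated L X"
  have "Neg (Disj a b) \<in> X \<longleftrightarrow> Conj (Neg a) (Neg b) \<in> X"
    using X by (rule sat_iff_d) (rule negdisj_d)
  then show ?thesis using sat_conj[OF X] by simp
qed

lemma sat_negimp: "saturated L X \<Longrightarrow> Neg (Imp a b) \<in> X \<longleftrightarrow> a \<in> X \<and> Neg b \<in> X"
proof -
  assume X: "saturated L X"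
  have "Neg (Imp a b) \<in> X \<longleftrightarrow> Conj a (Neg b) \<in> X"
    using X by (rule sat_iff_d) (rule negimp_d)
  then show ?thesis using sat_conj[OF X] by simp
qed

lemma sat_imp: "saturated L X \<Longrightarrow> Imp a b \<in> X \<Longrightarrow> a \<in> X \<Longrightarrow> b \<in> X"
  by (meson derives.hyp derives.mp sat_cl)

lemma sat_thm: "saturated L X \<Longrightarrow> thmL L (Imp a b) \<Longrightarrow> a \<in> X \<Longrightarrow> b \<in> X"
  by (meson derives.hyp derives.mp derives.theorem_rule sat_cl)

lemma sat_thm0: "saturated L X \<Longrightarrow> thmL L a \<Longrightarrow> a \<in> X"
  by (meson derives.theorem_rule sat_cl)

lemma sat_UNIV: "saturated L UNIV"
  unfolding saturated_def by blast

lemma thm_neg_nnn: "thmL L (Imp (Neg a) (Neg (Neg (Neg a))))"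
  by (rule thm_by) (simp add: negneg_d derives.hyp)

lemma thm_nnn_neg: "thmL L (Imp (Neg (Neg (Neg a))) (Neg a))"
  by (rule thm_by) (metis negneg_d derives.hyp singletonI)

lemma sat_box_mono: "saturated L X \<Longrightarrow> thmL L (Imp a b) \<Longrightarrow> Box a \<in> X \<Longrightarrow> Box b \<in> X"
  by (meson sat_thm thmL.rbox)
lemma sat_dia_mono: "saturated L X \<Longrightarrow> thmL L (Imp a b) \<Longrightarrow> Dia a \<in> X \<Longrightarrow> Dia b \<in> X"
  by (meson sat_thm thmL.rdia)
lemma sat_nbox_mono: "saturated L X \<Longrightarrow> thmL L (Imp (Neg a) (Neg b)) \<Longrightarrow> Neg (Box a) \<in> X \<Longrightarrow> Neg (Box b) \<in> X"
  by (meson sat_thm thmL.rnbox)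
lemma sat_ndia_mono: "saturated L X \<Longrightarrow> thmL L (Imp (Neg a) (Neg b)) \<Longrightarrow> Neg (Dia a) \<in> X \<Longrightarrow> Neg (Dia b) \<in> X"
  by (meson sat_thm thmL.rndia)

lemma sat_box_top: assumes "saturated L X" shows "Box (Imp a a) \<in> X"
  by (rule sat_thm0[OF assms]) (rule ax_cn4k, rule cn4k_ax.intros)
lemma sat_ndia_top: assumes "saturated L X" shows "Neg (Dia (Neg (Imp a a))) \<in> X"
  by (rule sat_thm0[OF assms]) (rule ax_cn4k, rule cn4k_ax.intros)
lemma sat_box_conj: "saturated L X \<Longrightarrow> Box a \<in> X \<Longrightarrow> Box b \<in> X \<Longrightarrow> Box (Conj a b) \<in> X"
proof -
  assume X: "saturated L X" "Box a \<in> X" "Box b \<in> X"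
  have "thmL L (Imp (Conj (Box a) (Box b)) (Box (Conj a b)))" by (rule ax_cn4k, rule cn4k_ax.intros)
  moreover have "Conj (Box a) (Box b) \<in> X" using X sat_conj by blast
  ultimately show ?thesis using X(1) sat_thm by blast
qed
lemma sat_ndia_disj: "saturated L X \<Longrightarrow> Neg (Dia a) \<in> X \<Longrightarrow> Neg (Dia b) \<in> X \<Longrightarrow> Neg (Dia (Disj a b)) \<in> X"
proof -
  assume X: "saturated L X" "Neg (Dia a) \<in> X" "Neg (Dia b) \<in> X"
  have "thmL L (Imp (Conj (Neg (Dia a)) (Neg (Dia b))) (Neg (Dia (Disj a b))))" by (rule ax_cn4k, rule cn4k_ax.intros)
  moreover have "Conj (Neg (Dia a)) (Neg (Dia b)) \<in> X" using X sat_conj by blast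
  ultimately show ?thesis using X(1) sat_thm by blast
qed

lemma collapse:
  assumes "derives L S \<phi>" "S = H \<union> G" "h0 \<in> H"
    and dir: "\<And>h1 h2. h1 \<in> H \<Longrightarrow> h2 \<in> H \<Longrightarrow> \<exists>h\<in>H. derives L {h} h1 \<and> derives L {h} h2"
  shows "\<exists>h\<in>H. derives L (insert h G) \<phi>"
  using assms(1,2)
proof (induction rule: derives.induct)
  case (theorem_rule a)
  then show ?case using assms(3) derives.theorem_rule by blast
next
  case (hyp a)
  show ?case
  proof (cases "a \<in> H")
    case True
    then show ?thesis by (intro bexI[of _ a]) (auto intro: derives.hyp)
  next
    case False
    then have "a \<in> G" using hyp by blast
    then show ?thesis using assms(3) by (intro bexI[of _ h0]) (auto intro: derives.hyp)
  qed
next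
  case (mp a b)
  from mp.IH(1)[OF mp.prems] obtain h1 where h1: "h1 \<in> H" "derives L (insert h1 G) (Imp a b)" by blast
  from mp.IH(2)[OF mp.prems] obtain h2 where h2: "h2 \<in> H" "derives L (insert h2 G) a" by blast
  from dir[OF h1(1) h2(1)] obtain h where h: "h \<in> H" "derives L {h} h1" "derives L {h} h2" by blast
  have "derives L (insert h G) h1" by (rule dmono[OF h(2)]) auto
  moreover have "derives L (insert h1 (insert h G)) (Imp a b)" by (rule dmono[OF h1(2)]) auto
  ultimately have A: "derives L (insert h G) (Imp a b)" by (rule cut[rotated])
  have "derives L (insert h G) h2" by (rule dmono[OF h(3)]) auto
  moreover have "derives L (insert h2 (insert h G)) a" by (rule dmono[OF h2(2)]) auto
  ultimately have B: "derives L (insert h G) a" by (rule cut[rotated])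
  show ?case using h(1) A B derives.mp by blast
qed

definition boxc :: "'p fm set \<Rightarrow> 'p fm set" where
  "boxc X = {b. Box b \<in> X}"
definition ndc :: "'p fm set \<Rightarrow> 'p fm set" where
  "ndc X = {Neg c | c. Neg (Dia c) \<in> X}"

lemma collapse_box:
  assumes X: "saturated L X" and d: "derives L (boxc X \<union> G) \<phi>"
  shows "\<exists>b. Box b \<in> X \<and> derives L (insert b G) \<phi>"
proof -
  have "\<exists>h\<in>boxc X. derives L (insert h G) \<phi>"
  proof (rule collapse[OF d refl])
    show "Imp p p \<in> boxc X" for p :: "'a fm" unfolding boxc_def using sat_box_top[OF X] by simp
    fix h1 h2 assume "h1 \<in> boxc X" "h2 \<in> boxc X"
    then have "Conj h1 h2 \<in> boxc X" unfolding boxc_def using sat_box_conj[OF X] by simp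
    moreover have "derives L {Conj h1 h2} h1" "derives L {Conj h1 h2} h2"
      using conjE1_d conjE2_d derives.hyp by (metis singletonI)+
    ultimately show "\<exists>h\<in>boxc X. derives L {h} h1 \<and> derives L {h} h2" by blast
  qed
  then show ?thesis unfolding boxc_def by simp
qed

lemma collapse_ndia:
  assumes X: "saturated L X" and d: "derives L (ndc X \<union> G) \<phi>"
  shows "\<exists>c. Neg (Dia c) \<in> X \<and> derives L (insert (Neg c) G) \<phi>"
proof -
  have "\<exists>h\<in>ndc X. derives L (insert h G) \<phi>"
  proof (rule collapse[OF d refl])
    show "Neg (Neg (Imp p p)) \<in> ndc X" for p :: "'a fm" unfolding ndc_def using sat_ndia_top[OF X] by blast
    fix h1 h2 assume "h1 \<in> ndc X" "h2 \<in> ndc X"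
    then obtain c1 c2 where c: "h1 = Neg c1" "h2 = Neg c2" "Neg (Dia c1) \<in> X" "Neg (Dia c2) \<in> X"
      unfolding ndc_def by blast
    then have "Neg (Disj c1 c2) \<in> ndc X" unfolding ndc_def using sat_ndia_disj[OF X] by blast
    moreover have "derives L {Neg (Disj c1 c2)} (Conj (Neg c1) (Neg c2))"
      using negdisj_d derives.hyp by (metis singletonI)
    then have "derives L {Neg (Disj c1 c2)} h1" "derives L {Neg (Disj c1 c2)} h2"
      using conjE1_d conjE2_d c by blast+
    ultimately show "\<exists>h\<in>ndc X. derives L {h} h1 \<and> derives L {h} h2" by blast
  qed
  then show ?thesis unfolding ndc_def by blast
qed



lemma pm_thm: "L = VPm \<or> L = VOne \<Longrightarrow> a \<in> pm_ax \<Longrightarrow> thmL L a"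
  by (rule thmL.ax) (auto simp: axioms_def)
lemma vee_thm: "L = VVee \<or> L = VOne \<Longrightarrow> a \<in> vee_ax \<Longrightarrow> thmL L a"
  by (rule thmL.ax) (auto simp: axioms_def)
lemma join_thm: "L = VJoin \<or> L = VOne \<Longrightarrow> a \<in> join_ax \<Longrightarrow> thmL L a"
  by (rule thmL.ax) (auto simp: axioms_def)

lemma sat_iff_thm:
  assumes "saturated L X" "thmL L (Iff a b)"
  shows "a \<in> X \<longleftrightarrow> b \<in> X"
proof -
  have "derives L X (Iff a b)" using assms(2) by (rule derives.theorem_rule)
  then show ?thesis using assms(1) iffD1_d iffD2_d derives.hyp sat_cl by metis
qed

lemma sat_imp2: "saturated L X \<Longrightarrow> thmL L (Imp a (Imp b c)) \<Longrightarrow> a \<in> X \<Longrightarrow> b \<in> X \<Longrightarrow> c \<in> X"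
  by (meson sat_imp sat_thm)

lemma J1:
  assumes J: "L = VJoin \<or> L = VOne" and X: "saturated L X" and c: "Neg (Dia c) \<in> X"
  shows "Box (Neg c) \<in> X"
proof -
  have "Neg (Dia (Neg (Neg c))) \<in> X" by (rule sat_ndia_mono[OF X thm_neg_nnn c])
  moreover have "thmL L (Iff (Box (Neg c)) (Neg (Dia (Neg (Neg c)))))"
    by (rule join_thm[OF J]) (rule join_ax.intros)
  ultimately show ?thesis using sat_iff_thm[OF X] by blast
qed

lemma J2:
  assumes J: "L = VJoin \<or> L = VOne" and X: "saturated L X" and c: "Neg (Box b) \<in> X"
  shows "Dia (Neg b) \<in> X"
proof -
  have "Neg (Box (Neg (Neg b))) \<in> X" by (rule sat_nbox_mono[OF X thm_neg_nnn c])
  moreover have "thmL L (Iff (Dia (Neg b)) (Neg (Box (Neg (Neg b)))))"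
    by (rule join_thm[OF J]) (rule join_ax.intros)
  ultimately show ?thesis using sat_iff_thm[OF X] by blast
qed

lemma J3:
  assumes J: "L = VJoin \<or> L = VOne" and X: "saturated L X" and c: "Dia c \<in> X"
  shows "Neg (Box (Neg c)) \<in> X"
proof -
  have "thmL L (Iff (Dia c) (Neg (Box (Neg c))))"
    by (rule join_thm[OF J]) (rule join_ax.intros)
  then show ?thesis using sat_iff_thm[OF X] c by blast
qed

lemma J4:
  assumes J: "L = VJoin \<or> L = VOne" and X: "saturated L X" and c: "Box (Neg a) \<in> X"
  shows "Neg (Dia a) \<in> X"
proof -
  have "thmL L (Iff (Box (Neg a)) (Neg (Dia (Neg (Neg a)))))"
    by (rule join_thm[OF J]) (rule join_ax.intros)
  then have "Neg (Dia (Neg (Neg a))) \<in> X" using sat_iff_thm[OF X] c by blast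
  then show ?thesis by (rule sat_ndia_mono[OF X thm_nnn_neg])
qed

lemma J1b:
  assumes J: "L = VJoin \<or> L = VOne" and X: "saturated L X" and D: "boxc X \<subseteq> D"
  shows "ndc X \<subseteq> D"
  using J1[OF J X] D unfolding boxc_def ndc_def by blast

definition mk :: "'p fm set \<Rightarrow> 'p fm set set \<Rightarrow> 'p fm set set \<Rightarrow> 'p fm set set \<Rightarrow> 'p fm set set \<Rightarrow> 'p seg" where
  "mk X bp bm dp dm = \<lparr>head = X, PhiBp = bp, PhiBm = bm, PhiDp = dp, PhiDm = dm\<rparr>"

lemma mk_sel[simp]: "head (mk X bp bm dp dm) = X" "PhiBp (mk X bp bm dp dm) = bp"
  "PhiBm (mk X bp bm dp dm) = bm" "PhiDp (mk X bp bm dp dm) = dp" "PhiDm (mk X bp bm dp dm) = dm"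
  by (simp_all add: mk_def)

lemma star_intro:
  assumes "saturated L X"
    and "\<forall>D\<in>bp. saturated L D" "\<forall>D\<in>bm. saturated L D" "\<forall>D\<in>dp. saturated L D" "\<forall>D\<in>dm. saturated L D"
    and "\<forall>D\<in>bp. boxc X \<subseteq> D"
    and "\<forall>b. Neg (Box b) \<in> X \<longrightarrow> (\<exists>D\<in>bm. Neg b \<in> D)"
    and "\<forall>c. Dia c \<in> X \<longrightarrow> (\<exists>D\<in>dp. c \<in> D)"
    and "\<forall>D\<in>dm. ndc X \<subseteq> D"
    and "shape L (mk X bp bm dp dm)"
  shows "star_segment L (mk X bp bm dp dm)"
  unfolding star_segment_def segment_def mk_sel
  using assms(1-10) unfolding boxc_def ndc_def by blast

lemma seg_facts:
  assumes "star_segment L s"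
  shows "saturated L (head s)"
    "\<And>D. D \<in> PhiBp s \<Longrightarrow> saturated L D" "\<And>D. D \<in> PhiBm s \<Longrightarrow> saturated L D"
    "\<And>D. D \<in> PhiDp s \<Longrightarrow> saturated L D" "\<And>D. D \<in> PhiDm s \<Longrightarrow> saturated L D"
    "\<And>a D. Box a \<in> head s \<Longrightarrow> D \<in> PhiBp s \<Longrightarrow> a \<in> D"
    "\<And>a. Neg (Box a) \<in> head s \<Longrightarrow> \<exists>D\<in>PhiBm s. Neg a \<in> D"
    "\<And>a. Dia a \<in> head s \<Longrightarrow> \<exists>D\<in>PhiDp s. a \<in> D"
    "\<And>a D. Neg (Dia a) \<in> head s \<Longrightarrow> D \<in> PhiDm s \<Longrightarrow> Neg a \<in> D"
proof -
  have S: "segment L s" using assms unfolding star_segment_def by simp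
  note S' = S[unfolded segment_def]
  show "saturated L (head s)" using S' by simp
  show "\<And>D. D \<in> PhiBp s \<Longrightarrow> saturated L D" using S' by simp
  show "\<And>D. D \<in> PhiBm s \<Longrightarrow> saturated L D" using S' by simp
  show "\<And>D. D \<in> PhiDp s \<Longrightarrow> saturated L D" using S' by simp
  show "\<And>D. D \<in> PhiDm s \<Longrightarrow> saturated L D" using S' by simp
  show "\<And>a D. Box a \<in> head s \<Longrightarrow> D \<in> PhiBp s \<Longrightarrow> a \<in> D" using S' by simp
  show "\<And>a. Neg (Box a) \<in> head s \<Longrightarrow> \<exists>D\<in>PhiBm s. Neg a \<in> D" using S' by simp
  show "\<And>a. Dia a \<in> head s \<Longrightarrow> \<exists>D\<in>PhiDp s. a \<in> D" using S' by simp
  show "\<And>a D. Neg (Dia a) \<in> head s \<Longrightarrow> D \<in> PhiDm s \<Longrightarrow> Neg a \<in> D" using S' by simp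
qed

definition seg0 :: "'p fm set \<Rightarrow> 'p seg" where
  "seg0 D = mk D {UNIV} {UNIV} {UNIV} {UNIV}"

lemma seg0_head[simp]: "head (seg0 D) = D"
  by (simp add: seg0_def)

lemma seg0_star: assumes "saturated L D" shows "star_segment L (seg0 D)"
  unfolding seg0_def
  apply (rule star_intro[OF assms])
  apply (simp_all add: sat_UNIV)
  apply (cases L)
  apply simp_all
  done



lemma nd_boxc:
  assumes X: "saturated L X" and na: "Box a \<notin> X"
  shows "\<not> derives L (boxc X) a"
proof
  assume "derives L (boxc X) a"
  then have "derives L (boxc X \<union> {}) a" by simp
  from collapse_box[OF X this] obtain b where b: "Box b \<in> X" "derives L {b} a" by auto
  have "Box a \<in> X" by (rule sat_box_mono[OF X thm_by[OF b(2)] b(1)])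
  with na show False by simp
qed

lemma nd_ndc:
  assumes X: "saturated L X" and na: "Neg (Dia a) \<notin> X"
  shows "\<not> derives L (ndc X) (Neg a)"
proof
  assume "derives L (ndc X) (Neg a)"
  then have "derives L (ndc X \<union> {}) (Neg a)" by simp
  from collapse_ndia[OF X this] obtain c where c: "Neg (Dia c) \<in> X" "derives L {Neg c} (Neg a)" by auto
  have "Neg (Dia a) \<in> X" by (rule sat_ndia_mono[OF X thm_by[OF c(2)] c(1)])
  with na show False by simp
qed

lemma nd_boxc_J:
  assumes J: "L = VJoin \<or> L = VOne" and X: "saturated L X" and na: "Neg (Dia a) \<notin> X"
  shows "\<not> derives L (boxc X) (Neg a)"
proof
  assume "derives L (boxc X) (Neg a)"
  then have "derives L (boxc X \<union> {}) (Neg a)" by simp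
  from collapse_box[OF X this] obtain b where b: "Box b \<in> X" "derives L {b} (Neg a)" by auto
  have "Box (Neg a) \<in> X" by (rule sat_box_mono[OF X thm_by[OF b(2)] b(1)])
  then have "Neg (Dia a) \<in> X" by (rule J4[OF J X])
  with na show False by simp
qed

lemma BM_pm:
  assumes L: "L = VPm \<or> L = VOne" and X: "saturated L X" and na: "Neg (Box a) \<notin> X" and nb: "Neg (Box b) \<in> X"
  shows "\<not> derives L (ndc X \<union> {Neg b}) (Neg a)"
proof
  assume d: "derives L (ndc X \<union> {Neg b}) (Neg a)"
  from collapse_ndia[OF X d] obtain c where c: "Neg (Dia c) \<in> X" "derives L (insert (Neg c) {Neg b}) (Neg a)" by auto
  have "derives L (insert (Neg b) {Neg c}) (Neg a)" using c(2) by (simp add: insert_commute)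
  then have "derives L {Neg c} (Imp (Neg b) (Neg a))" by (rule deduction)
  then have "derives L {Neg c} (Neg (Neg (Imp (Neg b) (Neg a))))" by (simp add: negneg_d)
  then have "thmL L (Imp (Neg c) (Neg (Neg (Imp (Neg b) (Neg a)))))" by (rule thm_by)
  then have A: "Neg (Dia (Neg (Imp (Neg b) (Neg a)))) \<in> X" by (rule sat_ndia_mono[OF X _ c(1)])
  have T: "thmL L (Imp (Neg (Dia (Neg (Imp (Neg b) (Neg a))))) (Imp (Neg (Box b)) (Neg (Box a))))"
    by (rule pm_thm[OF L]) (rule pm_ax.intros)
  have "Neg (Box a) \<in> X" by (rule sat_imp2[OF X T A nb])
  with na show False by simp
qed

lemma BM_vee:
  assumes L: "L = VVee \<or> L = VOne" and X: "saturated L X" and na: "Neg (Box a) \<notin> X" and nb: "Neg (Box b) \<in> X"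
  shows "\<not> derives L (boxc X \<union> {Neg b}) (Neg a)"
proof
  assume d: "derives L (boxc X \<union> {Neg b}) (Neg a)"
  from collapse_box[OF X d] obtain c where c: "Box c \<in> X" "derives L (insert c {Neg b}) (Neg a)" by auto
  have "derives L (insert (Neg b) {c}) (Neg a)" using c(2) by (simp add: insert_commute)
  then have "derives L {c} (Imp (Neg b) (Neg a))" by (rule deduction)
  then have "thmL L (Imp c (Imp (Neg b) (Neg a)))" by (rule thm_by)
  then have A: "Box (Imp (Neg b) (Neg a)) \<in> X" by (rule sat_box_mono[OF X _ c(1)])
  have B: "Neg (Box (Neg (Neg b))) \<in> X" by (rule sat_nbox_mono[OF X thm_neg_nnn nb])
  have T: "thmL L (Imp (Box (Imp (Neg b) (Neg a))) (Imp (Neg (Box (Neg (Neg b)))) (Neg (Box (Neg (Neg a))))))"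
    by (rule vee_thm[OF L]) (rule vee_ax.intros)
  have "Neg (Box (Neg (Neg a))) \<in> X" by (rule sat_imp2[OF X T A B])
  then have "Neg (Box a) \<in> X" by (rule sat_nbox_mono[OF X thm_nnn_neg])
  with na show False by simp
qed

lemma BM_join:
  assumes X: "saturated L X" and na: "Neg (Box a) \<notin> X" and nb: "Neg (Box b) \<in> X"
  shows "\<not> derives L {Neg b} (Neg a)"
proof
  assume d: "derives L {Neg b} (Neg a)"
  have "Neg (Box a) \<in> X" by (rule sat_nbox_mono[OF X thm_by[OF d] nb])
  with na show False by simp
qed

lemma DP_pm:
  assumes L: "L = VPm \<or> L = VOne" and X: "saturated L X" and na: "Dia a \<notin> X" and nc: "Dia c \<in> X"
  shows "\<not> derives L (boxc X \<union> {c}) a"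
proof
  assume d: "derives L (boxc X \<union> {c}) a"
  from collapse_box[OF X d] obtain b where b: "Box b \<in> X" "derives L (insert b {c}) a" by auto
  have "derives L (insert c {b}) a" using b(2) by (simp add: insert_commute)
  then have "derives L {b} (Imp c a)" by (rule deduction)
  then have "thmL L (Imp b (Imp c a))" by (rule thm_by)
  then have A: "Box (Imp c a) \<in> X" by (rule sat_box_mono[OF X _ b(1)])
  have T: "thmL L (Imp (Box (Imp c a)) (Imp (Dia c) (Dia a)))"
    by (rule pm_thm[OF L]) (rule pm_ax.intros)
  have "Dia a \<in> X" by (rule sat_imp2[OF X T A nc])
  with na show False by simp
qed

lemma DP_vee:
  assumes L: "L = VVee \<or> L = VOne" and X: "saturated L X" and na: "Dia a \<notin> X" and nc: "Dia c \<in> X"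
  shows "\<not> derives L (ndc X \<union> {c}) a"
proof
  assume d: "derives L (ndc X \<union> {c}) a"
  from collapse_ndia[OF X d] obtain e where e: "Neg (Dia e) \<in> X" "derives L (insert (Neg e) {c}) a" by auto
  have "derives L (insert c {Neg e}) a" using e(2) by (simp add: insert_commute)
  then have "derives L {Neg e} (Imp c a)" by (rule deduction)
  then have "derives L {Neg e} (Neg (Neg (Imp c a)))" by (simp add: negneg_d)
  then have "thmL L (Imp (Neg e) (Neg (Neg (Imp c a))))" by (rule thm_by)
  then have A: "Neg (Dia (Neg (Imp c a))) \<in> X" by (rule sat_ndia_mono[OF X _ e(1)])
  have T: "thmL L (Imp (Neg (Dia (Neg (Imp c a)))) (Imp (Dia c) (Dia a)))"
    by (rule vee_thm[OF L]) (rule vee_ax.intros)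
  have "Dia a \<in> X" by (rule sat_imp2[OF X T A nc])
  with na show False by simp
qed

lemma DP_join:
  assumes X: "saturated L X" and na: "Dia a \<notin> X" and nc: "Dia c \<in> X"
  shows "\<not> derives L {c} a"
proof
  assume d: "derives L {c} a"
  have "Dia a \<in> X" by (rule sat_dia_mono[OF X thm_by[OF d] nc])
  with na show False by simp
qed



lemma W_box_p:
  assumes X: "saturated L X" and na: "Box a \<notin> X"
  shows "\<exists>s'. star_segment L s' \<and> head s' = X \<and> (\<exists>D\<in>PhiBp s'. saturated L D \<and> a \<notin> D)"
proof -
  from lindenbaum[OF nd_boxc[OF X na]] obtain D where D: "boxc X \<subseteq> D" "saturated L D" "a \<notin> D" by blast
  have DJ: "ndc X \<subseteq> D" if "L = VJoin \<or> L = VOne" by (rule J1b[OF that X D(1)])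
  define f1 where "f1 = {D, UNIV}"
  define f0 where "f0 = {UNIV :: 'a fm set}"
  have f1: "\<forall>E\<in>f1. saturated L E" "\<forall>E\<in>f1. boxc X \<subseteq> E" "\<And>x. \<exists>E\<in>f1. x \<in> E"
    using D sat_UNIV unfolding f1_def by auto
  have f0: "\<forall>E\<in>f0. saturated L E" "\<forall>E\<in>f0. boxc X \<subseteq> E" "\<forall>E\<in>f0. ndc X \<subseteq> E" "\<And>x. \<exists>E\<in>f0. x \<in> E"
    using sat_UNIV unfolding f0_def by auto
  have f1J: "\<forall>E\<in>f1. ndc X \<subseteq> E" if "L = VJoin \<or> L = VOne" using DJ[OF that] unfolding f1_def by auto
  have D1: "D \<in> f1" unfolding f1_def by simp
  have ex: "\<exists>E\<in>PhiBp s. saturated L E \<and> a \<notin> E" if "PhiBp s = f1" for s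
    using that D D1 by blast
  show ?thesis
  proof (cases L)
    case VPm
    have "star_segment L (mk X f1 f0 f1 f0)"
      by (rule star_intro[OF X]) (use f0 f1 VPm in simp_all)
    then show ?thesis using ex[of "mk X f1 f0 f1 f0"] by (intro exI[of _ "mk X f1 f0 f1 f0"]) simp
  next
    case VVee
    have "star_segment L (mk X f1 f1 f0 f0)"
      by (rule star_intro[OF X]) (use f0 f1 VVee in simp_all)
    then show ?thesis using ex[of "mk X f1 f1 f0 f0"] by (intro exI[of _ "mk X f1 f1 f0 f0"]) simp
  next
    case VJoin
    have "star_segment L (mk X f1 f0 f0 f1)"
      by (rule star_intro[OF X]) (use f0 f1 f1J VJoin in simp_all)
    then show ?thesis using ex[of "mk X f1 f0 f0 f1"] by (intro exI[of _ "mk X f1 f0 f0 f1"]) simp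
  next
    case VOne
    have "star_segment L (mk X f1 f1 f1 f1)"
      by (rule star_intro[OF X]) (use f0 f1 f1J VOne in simp_all)
    then show ?thesis using ex[of "mk X f1 f1 f1 f1"] by (intro exI[of _ "mk X f1 f1 f1 f1"]) simp
  qed
qed


lemma W_dia_m:
  assumes X: "saturated L X" and na: "Neg (Dia a) \<notin> X"
  shows "\<exists>s'. star_segment L s' \<and> head s' = X \<and> (\<exists>D\<in>PhiDm s'. saturated L D \<and> Neg a \<notin> D)"
proof (cases L)
  case VPm
  from lindenbaum[OF nd_ndc[OF X na]] obtain D where D: "ndc X \<subseteq> D" "saturated L D" "Neg a \<notin> D" by blast
  let ?s = "mk X {UNIV} {D, UNIV} {UNIV} {D, UNIV}"
  have "star_segment L ?s"
    by (rule star_intro[OF X]) (use D VPm in \<open>simp_all add: sat_UNIV\<close>)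
  then show ?thesis using D by (intro exI[of _ ?s]) simp
next
  case VVee
  from lindenbaum[OF nd_ndc[OF X na]] obtain D where D: "ndc X \<subseteq> D" "saturated L D" "Neg a \<notin> D" by blast
  let ?s = "mk X {UNIV} {UNIV} {D, UNIV} {D, UNIV}"
  have "star_segment L ?s"
    by (rule star_intro[OF X]) (use D VVee in \<open>simp_all add: sat_UNIV\<close>)
  then show ?thesis using D by (intro exI[of _ ?s]) simp
next
  case VJoin
  then have J: "L = VJoin \<or> L = VOne" by simp
  from lindenbaum[OF nd_boxc_J[OF J X na]] obtain D where D: "boxc X \<subseteq> D" "saturated L D" "Neg a \<notin> D" by blast
  have D2: "ndc X \<subseteq> D" by (rule J1b[OF J X D(1)])
  let ?s = "mk X {D, UNIV} {UNIV} {UNIV} {D, UNIV}"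
  have "star_segment L ?s"
    by (rule star_intro[OF X]) (use D D2 VJoin in \<open>simp_all add: sat_UNIV\<close>)
  then show ?thesis using D by (intro exI[of _ ?s]) simp
next
  case VOne
  then have J: "L = VJoin \<or> L = VOne" by simp
  from lindenbaum[OF nd_boxc_J[OF J X na]] obtain D where D: "boxc X \<subseteq> D" "saturated L D" "Neg a \<notin> D" by blast
  have D2: "ndc X \<subseteq> D" by (rule J1b[OF J X D(1)])
  let ?s = "mk X {D, UNIV} {D, UNIV} {D, UNIV} {D, UNIV}"
  have "star_segment L ?s"
    by (rule star_intro[OF X]) (use D D2 VOne in \<open>simp_all add: sat_UNIV\<close>)
  then show ?thesis using D by (intro exI[of _ ?s]) simp
qed

lemma W_box_m:
  assumes X: "saturated L X" and na: "Neg (Box a) \<notin> X"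
  shows "\<exists>s'. star_segment L s' \<and> head s' = X \<and> (\<forall>D\<in>PhiBm s'. Neg a \<notin> D)"
proof (cases L)
  case VPm
  then have L: "L = VPm \<or> L = VOne" by simp
  define F where "F = {D. saturated L D \<and> Neg a \<notin> D \<and> ndc X \<subseteq> D}"
  have nb: "\<exists>D\<in>F. Neg b \<in> D" if "Neg (Box b) \<in> X" for b
  proof -
    from lindenbaum[OF BM_pm[OF L X na that]] obtain D where
      "ndc X \<union> {Neg b} \<subseteq> D" "saturated L D" "Neg a \<notin> D" by blast
    then show ?thesis unfolding F_def by blast
  qed
  let ?s = "mk X {UNIV} F {UNIV} F"
  have "star_segment L ?s"
    by (rule star_intro[OF X]) (use nb VPm in \<open>simp_all add: sat_UNIV F_def\<close>)
  then show ?thesis by (intro exI[of _ ?s]) (simp add: F_def)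
next
  case VVee
  then have L: "L = VVee \<or> L = VOne" by simp
  define F where "F = {D. saturated L D \<and> Neg a \<notin> D \<and> boxc X \<subseteq> D}"
  have nb: "\<exists>D\<in>F. Neg b \<in> D" if "Neg (Box b) \<in> X" for b
  proof -
    from lindenbaum[OF BM_vee[OF L X na that]] obtain D where
      "boxc X \<union> {Neg b} \<subseteq> D" "saturated L D" "Neg a \<notin> D" by blast
    then show ?thesis unfolding F_def by blast
  qed
  let ?s = "mk X F F {UNIV} {UNIV}"
  have "star_segment L ?s"
    by (rule star_intro[OF X]) (use nb VVee in \<open>simp_all add: sat_UNIV F_def\<close>)
  then show ?thesis by (intro exI[of _ ?s]) (simp add: F_def)
next
  case VJoin
  then have J: "L = VJoin \<or> L = VOne" by simp
  define F where "F = {D. saturated L D \<and> Neg a \<notin> D}"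
  have nb: "\<exists>D\<in>F. Neg b \<in> D" if "Neg (Box b) \<in> X" for b
  proof -
    from lindenbaum[OF BM_join[OF X na that]] obtain D where
      "{Neg b} \<subseteq> D" "saturated L D" "Neg a \<notin> D" by blast
    then show ?thesis unfolding F_def by blast
  qed
  have dp: "\<exists>D\<in>F. c \<in> D" if "Dia c \<in> X" for c
  proof -
    from nb[OF J3[OF J X that]] obtain D where "D \<in> F" "Neg (Neg c) \<in> D" by blast
    then show ?thesis unfolding F_def using sat_negneg by blast
  qed
  let ?s = "mk X {UNIV} F F {UNIV}"
  have "star_segment L ?s"
    by (rule star_intro[OF X]) (use nb dp VJoin in \<open>simp_all add: sat_UNIV F_def\<close>)
  then show ?thesis by (intro exI[of _ ?s]) (simp add: F_def)
next
  case VOne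
  then have J: "L = VJoin \<or> L = VOne" and L: "L = VVee \<or> L = VOne" by simp_all
  define F where "F = {D. saturated L D \<and> Neg a \<notin> D \<and> boxc X \<subseteq> D \<and> ndc X \<subseteq> D}"
  have nb: "\<exists>D\<in>F. Neg b \<in> D" if "Neg (Box b) \<in> X" for b
  proof -
    from lindenbaum[OF BM_vee[OF L X na that]] obtain D where
      D: "boxc X \<union> {Neg b} \<subseteq> D" "saturated L D" "Neg a \<notin> D" by blast
    then have "ndc X \<subseteq> D" using J1b[OF J X] by blast
    then show ?thesis using D unfolding F_def by blast
  qed
  have dp: "\<exists>D\<in>F. c \<in> D" if "Dia c \<in> X" for c
  proof -
    from nb[OF J3[OF J X that]] obtain D where "D \<in> F" "Neg (Neg c) \<in> D" by blast
    then show ?thesis unfolding F_def using sat_negneg by blast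
  qed
  let ?s = "mk X F F F F"
  have "star_segment L ?s"
    by (rule star_intro[OF X]) (use nb dp VOne in \<open>simp_all add: sat_UNIV F_def\<close>)
  then show ?thesis by (intro exI[of _ ?s]) (simp add: F_def)
qed

lemma W_dia_p:
  assumes X: "saturated L X" and na: "Dia a \<notin> X"
  shows "\<exists>s'. star_segment L s' \<and> head s' = X \<and> (\<forall>D\<in>PhiDp s'. a \<notin> D)"
proof (cases L)
  case VPm
  then have L: "L = VPm \<or> L = VOne" by simp
  define F where "F = {D. saturated L D \<and> a \<notin> D \<and> boxc X \<subseteq> D}"
  have dp: "\<exists>D\<in>F. c \<in> D" if "Dia c \<in> X" for c
  proof -
    from lindenbaum[OF DP_pm[OF L X na that]] obtain D where
      "boxc X \<union> {c} \<subseteq> D" "saturated L D" "a \<notin> D" by blast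
    then show ?thesis unfolding F_def by blast
  qed
  let ?s = "mk X F {UNIV} F {UNIV}"
  have "star_segment L ?s"
    by (rule star_intro[OF X]) (use dp VPm in \<open>simp_all add: sat_UNIV F_def\<close>)
  then show ?thesis by (intro exI[of _ ?s]) (simp add: F_def)
next
  case VVee
  then have L: "L = VVee \<or> L = VOne" by simp
  define F where "F = {D. saturated L D \<and> a \<notin> D \<and> ndc X \<subseteq> D}"
  have dp: "\<exists>D\<in>F. c \<in> D" if "Dia c \<in> X" for c
  proof -
    from lindenbaum[OF DP_vee[OF L X na that]] obtain D where
      "ndc X \<union> {c} \<subseteq> D" "saturated L D" "a \<notin> D" by blast
    then show ?thesis unfolding F_def by blast
  qed
  let ?s = "mk X {UNIV} {UNIV} F F"
  have "star_segment L ?s"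
    by (rule star_intro[OF X]) (use dp VVee in \<open>simp_all add: sat_UNIV F_def\<close>)
  then show ?thesis by (intro exI[of _ ?s]) (simp add: F_def)
next
  case VJoin
  then have J: "L = VJoin \<or> L = VOne" by simp
  define F where "F = {D. saturated L D \<and> a \<notin> D}"
  have dp: "\<exists>D\<in>F. c \<in> D" if "Dia c \<in> X" for c
  proof -
    from lindenbaum[OF DP_join[OF X na that]] obtain D where
      "{c} \<subseteq> D" "saturated L D" "a \<notin> D" by blast
    then show ?thesis unfolding F_def by blast
  qed
  have nb: "\<exists>D\<in>F. Neg b \<in> D" if "Neg (Box b) \<in> X" for b
    by (rule dp[OF J2[OF J X that]])
  let ?s = "mk X {UNIV} F F {UNIV}"
  have "star_segment L ?s"
    by (rule star_intro[OF X]) (use nb dp VJoin in \<open>simp_all add: sat_UNIV F_def\<close>)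
  then show ?thesis by (intro exI[of _ ?s]) (simp add: F_def)
next
  case VOne
  then have J: "L = VJoin \<or> L = VOne" and L: "L = VPm \<or> L = VOne" by simp_all
  define F where "F = {D. saturated L D \<and> a \<notin> D \<and> boxc X \<subseteq> D \<and> ndc X \<subseteq> D}"
  have dp: "\<exists>D\<in>F. c \<in> D" if "Dia c \<in> X" for c
  proof -
    from lindenbaum[OF DP_pm[OF L X na that]] obtain D where
      D: "boxc X \<union> {c} \<subseteq> D" "saturated L D" "a \<notin> D" by blast
    then have "ndc X \<subseteq> D" using J1b[OF J X] by blast
    then show ?thesis using D unfolding F_def by blast
  qed
  have nb: "\<exists>D\<in>F. Neg b \<in> D" if "Neg (Box b) \<in> X" for b
    by (rule dp[OF J2[OF J X that]])
  let ?s = "mk X F F F F"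
  have "star_segment L ?s"
    by (rule star_intro[OF X]) (use nb dp VOne in \<open>simp_all add: sat_UNIV F_def\<close>)
  then show ?thesis by (intro exI[of _ ?s]) (simp add: F_def)
qed



lemma canon_simps:
  "s \<in> W (canon L) \<longleftrightarrow> star_segment L s"
  "le (canon L) s s' \<longleftrightarrow> head s \<subseteq> head s'"
  "RBp (canon L) s s' \<longleftrightarrow> head s' \<in> PhiBp s"
  "RBm (canon L) s s' \<longleftrightarrow> head s' \<in> PhiBm s"
  "RDp (canon L) s s' \<longleftrightarrow> head s' \<in> PhiDp s"
  "RDm (canon L) s s' \<longleftrightarrow> head s' \<in> PhiDm s"
  "vp (canon L) p = {s. star_segment L s \<and> Var p \<in> head s}"
  "vm (canon L) p = {s. star_segment L s \<and> Neg (Var p) \<in> head s}"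
  by (simp_all add: canon_def)

lemma seg0W: "saturated L D \<Longrightarrow> seg0 D \<in> W (canon L)"
  using seg0_star by (simp add: canon_simps)

lemma truth:
  fixes a :: "'p fm"
  shows "s \<in> W (canon L) \<Longrightarrow> (forces (canon L) True s a \<longleftrightarrow> a \<in> head s) \<and> (forces (canon L) False s a \<longleftrightarrow> Neg a \<in> head s)"
proof (induction a arbitrary: s)
  case (Var p)
  then show ?case by (simp add: canon_simps)
next
  case (Neg a)
  have X: "saturated L (head s)" using Neg.prems seg_facts(1) by (simp add: canon_simps)
  show ?case using Neg.IH[OF Neg.prems] sat_negneg[OF X] by simp
next
  case (Conj a c)
  have X: "saturated L (head s)" using Conj.prems seg_facts(1) by (simp add: canon_simps)
  show ?case using Conj.IH(1)[OF Conj.prems] Conj.IH(2)[OF Conj.prems] sat_conj[OF X] sat_negconj[OF X] by simp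
next
  case (Disj a c)
  have X: "saturated L (head s)" using Disj.prems seg_facts(1) by (simp add: canon_simps)
  show ?case using Disj.IH(1)[OF Disj.prems] Disj.IH(2)[OF Disj.prems] sat_disj[OF X] sat_negdisj[OF X] by simp
next
  case (Imp a c)
  have X: "saturated L (head s)" using Imp.prems seg_facts(1) by (simp add: canon_simps)
  have neg: "forces (canon L) False s (Imp a c) \<longleftrightarrow> Neg (Imp a c) \<in> head s"
    using Imp.IH(1)[OF Imp.prems] Imp.IH(2)[OF Imp.prems] sat_negimp[OF X] by simp
  have pos: "forces (canon L) True s (Imp a c) \<longleftrightarrow> Imp a c \<in> head s"
  proof
    assume f: "forces (canon L) True s (Imp a c)"
    show "Imp a c \<in> head s"
    proof (rule ccontr)
      assume n: "Imp a c \<notin> head s"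
      have "\<not> derives L (insert a (head s)) c"
      proof
        assume "derives L (insert a (head s)) c"
        then have "derives L (head s) (Imp a c)" by (rule deduction)
        then have "Imp a c \<in> head s" by (rule sat_cl[OF X])
        with n show False by simp
      qed
      from lindenbaum[OF this] obtain Y where Y: "insert a (head s) \<subseteq> Y" "saturated L Y" "c \<notin> Y" by blast
      have tW: "seg0 Y \<in> W (canon L)" by (rule seg0W[OF Y(2)])
      have le: "le (canon L) s (seg0 Y)" using Y(1) by (simp add: canon_simps)
      have "forces (canon L) True (seg0 Y) a \<longrightarrow> forces (canon L) True (seg0 Y) c"
        using f tW le by simp
      moreover have "forces (canon L) True (seg0 Y) a" using Imp.IH(1)[OF tW] Y(1) by simp
      moreover have "\<not> forces (canon L) True (seg0 Y) c" using Imp.IH(2)[OF tW] Y(3) by simp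
      ultimately show False by blast
    qed
  next
    assume m: "Imp a c \<in> head s"
    show "forces (canon L) True s (Imp a c)"
      unfolding forces.simps
    proof (intro ballI impI)
      fix w' assume w: "w' \<in> W (canon L)" "le (canon L) s w'" "forces (canon L) True w' a"
      have Xw: "saturated L (head w')" using w(1) seg_facts(1) by (simp add: canon_simps)
      have "Imp a c \<in> head w'" using m w(2) by (auto simp: canon_simps)
      moreover have "a \<in> head w'" using Imp.IH(1)[OF w(1)] w(3) by simp
      ultimately have "c \<in> head w'" by (rule sat_imp[OF Xw])
      then show "forces (canon L) True w' c" using Imp.IH(2)[OF w(1)] by simp
    qed
  qed
  show ?case using pos neg by simp
next
  case (Box a)
  have sW: "star_segment L s" using Box.prems by (simp add: canon_simps)
  note X = seg_facts(1)[OF sW]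
  have pos: "forces (canon L) True s (Box a) \<longleftrightarrow> Box a \<in> head s"
  proof
    assume f: "forces (canon L) True s (Box a)"
    show "Box a \<in> head s"
    proof (rule ccontr)
      assume n: "Box a \<notin> head s"
      from W_box_p[OF X n] obtain s' D where s': "star_segment L s'" "head s' = head s"
        "D \<in> PhiBp s'" "saturated L D" "a \<notin> D" by blast
      have s'W: "s' \<in> W (canon L)" using s'(1) by (simp add: canon_simps)
      have le: "le (canon L) s s'" using s'(2) by (simp add: canon_simps)
      have tW: "seg0 D \<in> W (canon L)" by (rule seg0W[OF s'(4)])
      have R: "RBp (canon L) s' (seg0 D)" using s'(3) by (simp add: canon_simps)
      have "forces (canon L) True (seg0 D) a" using f s'W le tW R by auto
      then show False using Box.IH[OF tW] s'(5) by simp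
    qed
  next
    assume m: "Box a \<in> head s"
    show "forces (canon L) True s (Box a)"
      unfolding forces.simps
    proof (intro ballI impI)
      fix w' w'' assume w: "w' \<in> W (canon L)" "le (canon L) s w'" "w'' \<in> W (canon L)" "RBp (canon L) w' w''"
      have w'S: "star_segment L w'" using w(1) by (simp add: canon_simps)
      have "Box a \<in> head w'" using m w(2) by (auto simp: canon_simps)
      moreover have "head w'' \<in> PhiBp w'" using w(4) by (simp add: canon_simps)
      ultimately have "a \<in> head w''" by (rule seg_facts(6)[OF w'S])
      then show "forces (canon L) True w'' a" using Box.IH[OF w(3)] by simp
    qed
  qed
  have neg: "forces (canon L) False s (Box a) \<longleftrightarrow> Neg (Box a) \<in> head s"
  proof
    assume f: "forces (canon L) False s (Box a)"
    show "Neg (Box a) \<in> head s"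
    proof (rule ccontr)
      assume n: "Neg (Box a) \<notin> head s"
      from W_box_m[OF X n] obtain s' where s': "star_segment L s'" "head s' = head s"
        "\<forall>D\<in>PhiBm s'. Neg a \<notin> D" by blast
      have s'W: "s' \<in> W (canon L)" using s'(1) by (simp add: canon_simps)
      have le: "le (canon L) s s'" using s'(2) by (simp add: canon_simps)
      from f s'W le obtain w'' where w'': "w'' \<in> W (canon L)" "RBm (canon L) s' w''" "forces (canon L) False w'' a"
        by auto
      have "Neg a \<in> head w''" using Box.IH[OF w''(1)] w''(3) by simp
      moreover have "head w'' \<in> PhiBm s'" using w''(2) by (simp add: canon_simps)
      ultimately show False using s'(3) by blast
    qed
  next
    assume m: "Neg (Box a) \<in> head s"
    show "forces (canon L) False s (Box a)"
      unfolding forces.simps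
    proof (intro ballI impI)
      fix w' assume w: "w' \<in> W (canon L)" "le (canon L) s w'"
      have w'S: "star_segment L w'" using w(1) by (simp add: canon_simps)
      have "Neg (Box a) \<in> head w'" using m w(2) by (auto simp: canon_simps)
      from seg_facts(7)[OF w'S this] obtain D where D: "D \<in> PhiBm w'" "Neg a \<in> D" by blast
      have DS: "saturated L D" by (rule seg_facts(3)[OF w'S D(1)])
      have tW: "seg0 D \<in> W (canon L)" by (rule seg0W[OF DS])
      have R: "RBm (canon L) w' (seg0 D)" using D(1) by (simp add: canon_simps)
      have "forces (canon L) False (seg0 D) a" using Box.IH[OF tW] D(2) by simp
      then show "\<exists>w''\<in>W (canon L). RBm (canon L) w' w'' \<and> forces (canon L) False w'' a"
        using tW R by blast
    qed
  qed
  show ?case using pos neg by simp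
next
  case (Dia a)
  have sW: "star_segment L s" using Dia.prems by (simp add: canon_simps)
  note X = seg_facts(1)[OF sW]
  have pos: "forces (canon L) True s (Dia a) \<longleftrightarrow> Dia a \<in> head s"
  proof
    assume f: "forces (canon L) True s (Dia a)"
    show "Dia a \<in> head s"
    proof (rule ccontr)
      assume n: "Dia a \<notin> head s"
      from W_dia_p[OF X n] obtain s' where s': "star_segment L s'" "head s' = head s"
        "\<forall>D\<in>PhiDp s'. a \<notin> D" by blast
      have s'W: "s' \<in> W (canon L)" using s'(1) by (simp add: canon_simps)
      have le: "le (canon L) s s'" using s'(2) by (simp add: canon_simps)
      from f s'W le obtain w'' where w'': "w'' \<in> W (canon L)" "RDp (canon L) s' w''" "forces (canon L) True w'' a"
        by auto
      have "a \<in> head w''" using Dia.IH[OF w''(1)] w''(3) by simp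
      moreover have "head w'' \<in> PhiDp s'" using w''(2) by (simp add: canon_simps)
      ultimately show False using s'(3) by blast
    qed
  next
    assume m: "Dia a \<in> head s"
    show "forces (canon L) True s (Dia a)"
      unfolding forces.simps
    proof (intro ballI impI)
      fix w' assume w: "w' \<in> W (canon L)" "le (canon L) s w'"
      have w'S: "star_segment L w'" using w(1) by (simp add: canon_simps)
      have "Dia a \<in> head w'" using m w(2) by (auto simp: canon_simps)
      from seg_facts(8)[OF w'S this] obtain D where D: "D \<in> PhiDp w'" "a \<in> D" by blast
      have DS: "saturated L D" by (rule seg_facts(4)[OF w'S D(1)])
      have tW: "seg0 D \<in> W (canon L)" by (rule seg0W[OF DS])
      have R: "RDp (canon L) w' (seg0 D)" using D(1) by (simp add: canon_simps)
      have "forces (canon L) True (seg0 D) a" using Dia.IH[OF tW] D(2) by simp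
      then show "\<exists>w''\<in>W (canon L). RDp (canon L) w' w'' \<and> forces (canon L) True w'' a"
        using tW R by blast
    qed
  qed
  have neg: "forces (canon L) False s (Dia a) \<longleftrightarrow> Neg (Dia a) \<in> head s"
  proof
    assume f: "forces (canon L) False s (Dia a)"
    show "Neg (Dia a) \<in> head s"
    proof (rule ccontr)
      assume n: "Neg (Dia a) \<notin> head s"
      from W_dia_m[OF X n] obtain s' D where s': "star_segment L s'" "head s' = head s"
        "D \<in> PhiDm s'" "saturated L D" "Neg a \<notin> D" by blast
      have s'W: "s' \<in> W (canon L)" using s'(1) by (simp add: canon_simps)
      have le: "le (canon L) s s'" using s'(2) by (simp add: canon_simps)
      have tW: "seg0 D \<in> W (canon L)" by (rule seg0W[OF s'(4)])
      have R: "RDm (canon L) s' (seg0 D)" using s'(3) by (simp add: canon_simps)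
      have "forces (canon L) False (seg0 D) a" using f s'W le tW R by auto
      then show False using Dia.IH[OF tW] s'(5) by simp
    qed
  next
    assume m: "Neg (Dia a) \<in> head s"
    show "forces (canon L) False s (Dia a)"
      unfolding forces.simps
    proof (intro ballI impI)
      fix w' w'' assume w: "w' \<in> W (canon L)" "le (canon L) s w'" "w'' \<in> W (canon L)" "RDm (canon L) w' w''"
      have w'S: "star_segment L w'" using w(1) by (simp add: canon_simps)
      have "Neg (Dia a) \<in> head w'" using m w(2) by (auto simp: canon_simps)
      moreover have "head w'' \<in> PhiDm w'" using w(4) by (simp add: canon_simps)
      ultimately have "Neg a \<in> head w''" by (rule seg_facts(9)[OF w'S])
      then show "forces (canon L) False w'' a" using Dia.IH[OF w(3)] by simp
    qed
  qed
  show ?case using pos neg by simp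
qed


theorem lemma3:
  fixes L :: variant and a :: "'p::countable fm" and s :: "'p seg"
  assumes "s \<in> W (canon L)"
  shows "(forces (canon L) True s a \<longleftrightarrow> a \<in> head s)
       \<and> (forces (canon L) False s a \<longleftrightarrow> Neg a \<in> head s)"
  by (rule truth[OF assms])

end
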